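(* If $\rho\equiv\sum_{n=1}^N \frac{r_n}{C_n}\le 1$, then for all $t\ge 0$, $$B(t)\le \min\left\{\Big(\sum_n r_n\Big)\sum_n\frac{\sigma_n}{C_n}+\sum_n\sigma_n,\;\; C_{max}\sum_n\frac{\sigma_n}{C_n}+\rho\, C_{max}\max_n\frac{L_n}{C_n}\right\}.$$
   Context: A multiclass FIFO system serves packets from $N$ classes. Class $n$ has constant service rate $C_n>0$; $C_{max}=\max_n C_n$. All packets, indexed in order of arrival (ties broken arbitrarily) as $p^{g,1},p^{g,2},\dots$ with arrival times $0\le a^{g,1}\le\cdots$ and lengths $l^{g,j}>0$, depart at $d^{g,j}=\max\{a^{g,j},d^{g,j-1}\}+l^{g,j}/C_{c(j)}$, $d^{g,0}=0$, $c(j)$ the class of $p^{g,j}$. $L_n$ is the maximum packet length of class $n$. $A_n(s,t)$ is the total length of class-$n$ packets arriving in $[s,t]$; each class satisfies $A_n(s,t)\le r_n(t-s)+\sigma_n$ for all $0\le s\le t$, with $r_n,\sigma_n\ge0$. $A(t)$ is the total length of all packets arrived in $[0,t]$, $A^*(t)$ the total length of packets with departure time $\le t$, and the backlog is $B(t)=A(t)-A^*(t)$. *)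

theory Defs
  imports Complex_Main "HOL-Library.Extended_Nat"
begin

text \<open>Packets are indexed 1, 2, ... in order of arrival; the number of packets is
  M :: enat (possibly infinite). Packet j has arrival time a j, length l j and class c j.\<close>

definition packets :: "enat \<Rightarrow> nat set" where
  "packets M = {j. 1 \<le> j \<and> enat j \<le> M}"

fun dep :: "(nat \<Rightarrow> real) \<Rightarrow> (nat \<Rightarrow> real) \<Rightarrow> (nat \<Rightarrow> nat) \<Rightarrow> (nat \<Rightarrow> real) \<Rightarrow> nat \<Rightarrow> real" where
  "dep a l c C 0 = 0"
| "dep a l c C (Suc j) = max (a (Suc j)) (dep a l c C j) + l (Suc j) / C (c (Suc j))"

definition arr_class :: "enat \<Rightarrow> (nat \<Rightarrow> real) \<Rightarrow> (nat \<Rightarrow> real) \<Rightarrow> (nat \<Rightarrow> nat) \<Rightarrow> nat \<Rightarrow> real \<Rightarrow> real \<Rightarrow> real" where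
  "arr_class M a l c n s t = (\<Sum>j\<in>{j\<in>packets M. c j = n \<and> s \<le> a j \<and> a j \<le> t}. l j)"

definition arr :: "enat \<Rightarrow> (nat \<Rightarrow> real) \<Rightarrow> (nat \<Rightarrow> real) \<Rightarrow> real \<Rightarrow> real" where
  "arr M a l t = (\<Sum>j\<in>{j\<in>packets M. a j \<le> t}. l j)"

definition departed :: "enat \<Rightarrow> (nat \<Rightarrow> real) \<Rightarrow> (nat \<Rightarrow> real) \<Rightarrow> (nat \<Rightarrow> nat) \<Rightarrow> (nat \<Rightarrow> real) \<Rightarrow> real \<Rightarrow> real" where
  "departed M a l c C t = (\<Sum>j\<in>{j\<in>packets M. dep a l c C j \<le> t}. l j)"

definition backlog :: "enat \<Rightarrow> (nat \<Rightarrow> real) \<Rightarrow> (nat \<Rightarrow> real) \<Rightarrow> (nat \<Rightarrow> nat) \<Rightarrow> (nat \<Rightarrow> real) \<Rightarrow> real \<Rightarrow> real" where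
  "backlog M a l c C t = arr M a l t - departed M a l c C t"

end

theory Submission
  imports Defs
begin

lemma dep_ge_arr:
  assumes "j \<ge> 1" "l j / C (c j) \<ge> 0"
  shows "a j \<le> dep a l c C j"
proof -
  obtain m where m: "j = Suc m" using assms(1) by (cases j) auto
  show ?thesis using assms(2) unfolding m by simp
qed

lemma dep_mono:
  assumes "m \<le> j" "\<And>i. m < i \<Longrightarrow> i \<le> j \<Longrightarrow> l i / C (c i) \<ge> 0"
  shows "dep a l c C m \<le> dep a l c C j"
  using assms(1)
proof (induction j rule: dec_induct)
  case base then show ?case by simp
next
  case (step n)
  have "l (Suc n) / C (c (Suc n)) \<ge> 0" using assms(2) step by auto
  then show ?case using step by simp
qed

theorem theorem2:
  fixes N :: nat and M :: enat
    and a l :: "nat \<Rightarrow> real" and c :: "nat \<Rightarrow> nat"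
    and C r \<sigma> L :: "nat \<Rightarrow> real" and t :: real
  assumes N_pos: "N \<ge> 1"
    and C_pos: "\<forall>n\<in>{1..N}. C n > 0"
    and class_range: "\<forall>j\<in>packets M. c j \<in> {1..N}"
    and arr_nonneg: "\<forall>j\<in>packets M. 0 \<le> a j"
    and arr_mono: "\<forall>i\<in>packets M. \<forall>j\<in>packets M. i \<le> j \<longrightarrow> a i \<le> a j"
    and len_pos: "\<forall>j\<in>packets M. l j > 0"
    and L_max: "\<forall>j\<in>packets M. l j \<le> L (c j)"
    and L_attained: "\<forall>n\<in>{1..N}. (\<exists>j\<in>packets M. c j = n) \<longrightarrow> (\<exists>j\<in>packets M. c j = n \<and> l j = L n)"
    and L_nonneg: "\<forall>n\<in>{1..N}. L n \<ge> 0"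
    and finite_arrivals: "\<forall>s. finite {j\<in>packets M. a j \<le> s}"
    and r_nonneg: "\<forall>n\<in>{1..N}. r n \<ge> 0"
    and sigma_nonneg: "\<forall>n\<in>{1..N}. \<sigma> n \<ge> 0"
    and arrival_curve: "\<forall>n\<in>{1..N}. \<forall>s u. 0 \<le> s \<and> s \<le> u \<longrightarrow>
                          arr_class M a l c n s u \<le> r n * (u - s) + \<sigma> n"
    and load: "(\<Sum>n=1..N. r n / C n) \<le> 1"
    and t_nonneg: "t \<ge> 0"
  shows "backlog M a l c C t \<le>
           min ((\<Sum>n=1..N. r n) * (\<Sum>n=1..N. \<sigma> n / C n) + (\<Sum>n=1..N. \<sigma> n))
               (Max (C ` {1..N}) * (\<Sum>n=1..N. \<sigma> n / C n)
                + (\<Sum>n=1..N. r n / C n) * Max (C ` {1..N}) * Max ((\<lambda>n. L n / C n) ` {1..N}))"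
proof -
  define D where "D = dep a l c C"
  define w where "w j = l j / C (c j)" for j
  define \<rho> where "\<rho> = (\<Sum>n=1..N. r n / C n)"
  define R where "R = (\<Sum>n=1..N. r n)"
  define SS where "SS = (\<Sum>n=1..N. \<sigma> n / C n)"
  define Sg where "Sg = (\<Sum>n=1..N. \<sigma> n)"
  define Cm where "Cm = Max (C ` {1..N})"
  define Lm where "Lm = Max ((\<lambda>n. L n / C n) ` {1..N})"
  have pk: "j \<in> packets M \<longleftrightarrow> 1 \<le> j \<and> enat j \<le> M" for j by (simp add: packets_def)
  have pk_down: "i \<in> packets M" if "j \<in> packets M" "1 \<le> i" "i \<le> j" for i j
    using that by (simp add: packets_def) (meson enat_ord_simps(1) order_trans)
  have w_pos: "w j > 0" if "j \<in> packets M" for j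
    using that len_pos C_pos class_range w_def by auto
  have rho_nn: "\<rho> \<ge> 0" unfolding \<rho>_def using r_nonneg C_pos
    by (intro sum_nonneg) (auto intro: divide_nonneg_pos)
  have R_nn: "R \<ge> 0" unfolding R_def using r_nonneg by (intro sum_nonneg) auto
  have SS_nn: "SS \<ge> 0" unfolding SS_def using sigma_nonneg C_pos
    by (intro sum_nonneg) (auto intro: divide_nonneg_pos)
  have Sg_nn: "Sg \<ge> 0" unfolding Sg_def using sigma_nonneg by (intro sum_nonneg) auto
  have Cm_ge: "C n \<le> Cm" if "n \<in> {1..N}" for n unfolding Cm_def using that by auto
  have Cm_pos: "Cm > 0" using Cm_ge[of 1] C_pos N_pos by force
  have Lm_ge: "L n / C n \<le> Lm" if "n \<in> {1..N}" for n unfolding Lm_def using that by auto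
  have Lm_nn: "Lm \<ge> 0" using Lm_ge[of 1] L_nonneg C_pos N_pos
    by (meson atLeastAtMost_iff divide_nonneg_pos le_refl order_trans)
  have win: "(\<Sum>j\<in>S. l j) \<le> R * (u1 - u0) + Sg \<and> (\<Sum>j\<in>S. w j) \<le> \<rho> * (u1 - u0) + SS"
    if S: "S \<subseteq> packets M" "\<forall>j\<in>S. u0 \<le> a j \<and> a j \<le> u1" and u: "0 \<le> u0" "u0 \<le> u1"
    for S u0 u1
  proof -
    have fS: "finite S"
      by (rule finite_subset[OF _ finite_arrivals[rule_format, of u1]]) (use S in auto)
    have img: "c ` S \<subseteq> {1..N}" using S class_range by auto
    have cls: "(\<Sum>j\<in>{j\<in>S. c j = n}. l j) \<le> r n * (u1 - u0) + \<sigma> n" if n: "n \<in> {1..N}" for n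
    proof -
      have "(\<Sum>j\<in>{j\<in>S. c j = n}. l j) \<le> arr_class M a l c n u0 u1"
        unfolding arr_class_def
      proof (rule sum_mono2)
        show "finite {j \<in> packets M. c j = n \<and> u0 \<le> a j \<and> a j \<le> u1}"
          by (rule finite_subset[OF _ finite_arrivals[rule_format, of u1]]) auto
        show "{j \<in> S. c j = n} \<subseteq> {j \<in> packets M. c j = n \<and> u0 \<le> a j \<and> a j \<le> u1}"
          using S by auto
        show "0 \<le> l b" if "b \<in> {j \<in> packets M. c j = n \<and> u0 \<le> a j \<and> a j \<le> u1} - {j \<in> S. c j = n}" for b
          using that len_pos by fastforce
      qed
      also have "\<dots> \<le> r n * (u1 - u0) + \<sigma> n" using arrival_curve n u by auto
      finally show ?thesis .
    qed
    have "(\<Sum>j\<in>S. l j) = (\<Sum>n=1..N. \<Sum>j\<in>{j\<in>S. c j = n}. l j)"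
      using sum.group[OF fS _ img, of l] by simp
    also have "\<dots> \<le> (\<Sum>n=1..N. r n * (u1 - u0) + \<sigma> n)" by (rule sum_mono) (rule cls)
    also have "\<dots> = R * (u1 - u0) + Sg" unfolding R_def Sg_def
      by (simp add: sum.distrib sum_distrib_right)
    finally have A: "(\<Sum>j\<in>S. l j) \<le> R * (u1 - u0) + Sg" .
    have "(\<Sum>j\<in>S. w j) = (\<Sum>n=1..N. \<Sum>j\<in>{j\<in>S. c j = n}. w j)"
      using sum.group[OF fS _ img, of w] by simp
    also have "\<dots> = (\<Sum>n=1..N. (\<Sum>j\<in>{j\<in>S. c j = n}. l j) / C n)"
      unfolding w_def by (rule sum.cong) (auto simp: sum_divide_distrib)
    also have "\<dots> \<le> (\<Sum>n=1..N. (r n * (u1 - u0) + \<sigma> n) / C n)"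
      proof (rule sum_mono)
        fix n assume n: "n \<in> {1..N}"
        show "(\<Sum>j\<in>{j\<in>S. c j = n}. l j) / C n \<le> (r n * (u1 - u0) + \<sigma> n) / C n"
          proof (rule divide_right_mono)
          show "(\<Sum>j\<in>{j\<in>S. c j = n}. l j) \<le> r n * (u1 - u0) + \<sigma> n" by (rule cls[OF n])
          show "0 \<le> C n" using C_pos n by (meson less_imp_le)
        qed
      qed
    also have "\<dots> = \<rho> * (u1 - u0) + SS" unfolding \<rho>_def SS_def
      by (simp add: sum.distrib sum_distrib_right add_divide_distrib)
    finally show ?thesis using A by simp
  qed
  define Arr where "Arr = {j\<in>packets M. a j \<le> t}"
  define Dp where "Dp = {j\<in>packets M. D j \<le> t}"
  have fArr: "finite Arr" unfolding Arr_def using finite_arrivals by auto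
  have DpArr: "Dp \<subseteq> Arr"
  proof
    fix j assume "j \<in> Dp"
    then have j: "j \<in> packets M" "D j \<le> t" unfolding Dp_def by auto
    have "a j \<le> D j" unfolding D_def
      by (rule dep_ge_arr) (use j pk w_pos[of j] w_def in auto)
    then show "j \<in> Arr" using j Arr_def by auto
  qed
  define U where "U = Arr - Dp"
  have bl: "backlog M a l c C t = (\<Sum>j\<in>U. l j)"
    unfolding backlog_def arr_def departed_def U_def
    using sum_diff[OF fArr DpArr, of l] by (simp add: Arr_def Dp_def D_def)
  show ?thesis
  proof (cases "U = {}")
    case True
    have "0 \<le> R * SS + Sg" using R_nn SS_nn Sg_nn by simp
    moreover have "0 \<le> Cm * SS + \<rho> * Cm * Lm" using Cm_pos SS_nn rho_nn Lm_nn by simp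
    ultimately show ?thesis using bl True
      by (simp add: R_def SS_def Sg_def Cm_def \<rho>_def Lm_def)
  next
    case False
    have fU: "finite U" using fArr U_def by auto
    define k where "k = Min U"
    have kU: "k \<in> U" using False fU k_def by simp
    have kmin: "k \<le> j" if "j \<in> U" for j using fU that k_def by simp
    have kp: "k \<in> packets M" "a k \<le> t" "t < D k" using kU U_def Arr_def Dp_def by auto
    have k1: "k \<ge> 1" using kp pk by auto
    define I where "I = {m\<in>{1..k}. D (m - 1) \<le> a m}"
    have "1 \<in> I" unfolding I_def D_def using k1 pk_down[OF kp(1), of 1] arr_nonneg by auto
    have fI: "finite I" unfolding I_def by auto
    define i where "i = Max I"
    have iI: "i \<in> I" using \<open>1 \<in> I\<close> fI i_def by (metis Max_in empty_iff)
    have i1: "1 \<le> i" "i \<le> k" using iI I_def by auto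
    have inotI: "m \<notin> I" if "i < m" for m using fI i_def that
      by (metis Max_ge leD)
    define s where "s = a i"
    have ip: "i \<in> packets M" using pk_down[OF kp(1) i1] .
    have s_nn: "0 \<le> s" using arr_nonneg ip s_def by auto
    have busy: "D m = s + (\<Sum>j\<in>{i..m}. w j)" if "i \<le> m" "m \<le> k" for m
      using that
    proof (induction m rule: dec_induct)
      case base
      obtain p where p: "i = Suc p" using i1 by (cases i) auto
      have "D (i - 1) \<le> a i" using iI I_def by auto
      then show ?case unfolding D_def w_def s_def p by simp
    next
      case (step n)
      have "Suc n \<notin> I" using inotI step by simp
      then have "\<not> D n \<le> a (Suc n)" unfolding I_def using step i1 by auto
      then have "D (Suc n) = D n + w (Suc n)" unfolding D_def w_def by simp
      then show ?case using step by simp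
    qed
    define V where "V = (\<Sum>j\<in>{i..<k}. w j)"
    have Vk: "(\<Sum>j\<in>{i..k}. w j) = V + w k" unfolding V_def using i1
      by (simp add: sum.atLeastLessThan_Suc atLeastLessThanSuc_atLeastAtMost[symmetric])
    have t_lt: "t < s + V + w k" using busy[of k] i1 kp Vk by simp
    have V_nn: "V \<ge> 0" unfolding V_def
      using w_pos pk_down[OF kp(1)] i1 by (intro sum_nonneg) (auto intro: less_imp_le)
    have sV: "s + V \<le> t"
    proof (cases "i < k")
      case True
      have k2: "1 \<le> k - 1" "k - 1 \<le> k" "i \<le> k - 1" using True i1 by linarith+
      have km: "k - 1 \<in> packets M" by (rule pk_down[OF kp(1) k2(1,2)])
      have "a (k-1) \<le> a k" using arr_mono[rule_format, OF km kp(1) k2(2)] .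
      then have kA: "k - 1 \<in> Arr" using km kp(2) unfolding Arr_def by simp
      have kU': "k - 1 \<notin> U"
      proof
        assume "k - 1 \<in> U"
        then have "k \<le> k - 1" by (rule kmin)
        then show False using k1 by simp
      qed
      have "k - 1 \<in> Dp" using kA kU' unfolding U_def by blast
      then have "D (k-1) \<le> t" unfolding Dp_def by simp
      moreover have "{i..k-1} = {i..<k}" using k1 by auto
      moreover have "D (k-1) = s + (\<Sum>j\<in>{i..k-1}. w j)" by (rule busy[OF k2(3) k2(2)])
      ultimately have "D (k-1) = s + V" "D (k-1) \<le> t" unfolding V_def by simp_all
      then show ?thesis by simp
    next
      case False
      then have "i = k" using i1 by simp
      then show ?thesis using V_def kp s_def by simp
    qed
    have Ueq: "U = {j\<in>Arr. k \<le> j}"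
    proof
      show "U \<subseteq> {j\<in>Arr. k \<le> j}" using kmin U_def by auto
      show "{j\<in>Arr. k \<le> j} \<subseteq> U"
      proof
        fix j assume j: "j \<in> {j\<in>Arr. k \<le> j}"
        have jp: "j \<in> packets M" using j Arr_def by auto
        have "D k \<le> D j" unfolding D_def
          by (rule dep_mono) (use j pk_down[OF jp] w_pos w_def k1 in \<open>auto intro: less_imp_le\<close>)
        then show "j \<in> U" using j kp U_def Dp_def by auto
      qed
    qed
    have Ua: "\<forall>j\<in>U. a k \<le> a j \<and> a j \<le> t" using Ueq Arr_def arr_mono kp by auto
    have Up: "U \<subseteq> packets M" using U_def Arr_def by auto
    have W1: "(\<Sum>j\<in>{i..k}. w j) \<le> \<rho> * (a k - s) + SS"
    proof -
      have "{i..k} \<subseteq> packets M" using pk_down[OF kp(1)] i1 by auto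
      moreover have "\<forall>j\<in>{i..k}. s \<le> a j \<and> a j \<le> a k"
        using arr_mono pk_down[OF kp(1)] i1 kp s_def ip by auto
      moreover have "s \<le> a k" using arr_mono ip kp i1 s_def by auto
      ultimately show ?thesis using win[of "{i..k}" s "a k"] s_nn by blast
    qed
    have tak: "t - a k \<le> SS"
    proof -
      have "s \<le> a k" using arr_mono ip kp i1 s_def by auto
      moreover have "\<rho> \<le> 1" using load \<rho>_def by simp
      ultimately have "\<rho> * (a k - s) \<le> 1 * (a k - s)" by (intro mult_right_mono) auto
      then have "\<rho> * (a k - s) \<le> a k - s" by simp
      then show ?thesis using t_lt W1 Vk by linarith
    qed
    have ak_nn: "0 \<le> a k" using arr_nonneg kp by auto
    have "(\<Sum>j\<in>U. l j) \<le> R * (t - a k) + Sg" using win[OF Up Ua ak_nn kp(2)] by blast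
    also have "\<dots> \<le> R * SS + Sg" using tak R_nn by (simp add: mult_left_mono)
    finally have B1: "(\<Sum>j\<in>U. l j) \<le> R * SS + Sg" .
    define S2 where "S2 = {i..<k} \<union> U"
    have disj: "{i..<k} \<inter> U = {}" using kmin by fastforce
    have fik: "finite {i..<k}" by simp
    have sumS2: "(\<Sum>j\<in>S2. w j) = V + (\<Sum>j\<in>U. w j)"
      unfolding S2_def V_def using sum.union_disjoint[OF fik fU disj] by simp
    have W2: "(\<Sum>j\<in>S2. w j) \<le> \<rho> * (t - s) + SS"
    proof -
      have "S2 \<subseteq> packets M" using pk_down[OF kp(1)] i1 Up S2_def by auto
      moreover have "\<forall>j\<in>S2. s \<le> a j \<and> a j \<le> t"
      proof
        fix j assume "j \<in> S2"
        then consider "j \<in> {i..<k}" | "j \<in> U" using S2_def by auto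
        then show "s \<le> a j \<and> a j \<le> t"
        proof cases
          case 1
          then have "j \<in> packets M" using pk_down[OF kp(1)] i1 by auto
          then show ?thesis using arr_mono 1 ip kp s_def by fastforce
        next
          case 2
          then show ?thesis using Ua arr_mono ip kp i1 s_def by fastforce
        qed
      qed
      moreover have "s \<le> t" using sV V_nn by simp
      ultimately show ?thesis using win[of S2 s t] s_nn by blast
    qed
    have wk: "w k \<le> Lm"
    proof -
      have "l k \<le> L (c k)" using L_max kp by auto
      moreover have "C (c k) > 0" "c k \<in> {1..N}" using C_pos class_range kp by auto
      ultimately have "w k \<le> L (c k) / C (c k)" unfolding w_def by (simp add: divide_right_mono)
      then show ?thesis using Lm_ge \<open>c k \<in> {1..N}\<close> by fastforce
    qed
    have key: "\<rho> * (t - s) - V \<le> \<rho> * w k"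
    proof (cases "t - s \<ge> w k")
      case True
      have "(1 - \<rho>) * w k \<le> (1 - \<rho>) * (t - s)"
        using True load \<rho>_def by (intro mult_left_mono) auto
      then show ?thesis using t_lt by (simp add: algebra_simps)
    next
      case False
      then have "\<rho> * (t - s) \<le> \<rho> * w k" using rho_nn by (intro mult_left_mono) auto
      then show ?thesis using V_nn by simp
    qed
    have Uw: "(\<Sum>j\<in>U. w j) \<le> \<rho> * Lm + SS"
    proof -
      have "(\<Sum>j\<in>U. w j) \<le> \<rho> * w k + SS" using sumS2 W2 key by linarith
      also have "\<dots> \<le> \<rho> * Lm + SS" using wk rho_nn by (simp add: mult_left_mono)
      finally show ?thesis .
    qed
    have "(\<Sum>j\<in>U. l j) \<le> (\<Sum>j\<in>U. Cm * w j)"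
    proof (rule sum_mono)
      fix j assume j: "j \<in> U"
      then have "C (c j) > 0" "c j \<in> {1..N}" using C_pos class_range Up by auto
      then have "C (c j) \<le> Cm" using Cm_ge by auto
      moreover have "l j > 0" using len_pos Up j by auto
      ultimately show "l j \<le> Cm * w j" unfolding w_def using \<open>C (c j) > 0\<close>
        by (simp add: field_simps mult_right_mono)
    qed
    also have "\<dots> = Cm * (\<Sum>j\<in>U. w j)" by (simp add: sum_distrib_left)
    also have "\<dots> \<le> Cm * (\<rho> * Lm + SS)" using Uw Cm_pos by (simp add: mult_left_mono)
    finally have B2: "(\<Sum>j\<in>U. l j) \<le> Cm * SS + \<rho> * Cm * Lm" by (simp add: algebra_simps)
    show ?thesis using B1 B2 bl
      by (simp add: R_def SS_def Sg_def Cm_def \<rho>_def Lm_def)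
  qed
qed

end
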